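(* Let $R$ be a unital ring and $E$ a directed graph. Let $S=M(\mathbb{Z},I)\cup\{0\}$ be a Brandt semigroup over $\mathbb{Z}$ and $w$ a canonical weight mapping on $E$. Then the Leavitt path algebra $L_R(E)$, with the canonical $S$-grading determined by $w$, is nearly epsilon-strongly graded.
   Context: Directed graph $E=(E^0,E^1,\mathrm{r},\mathrm{s})$; paths $E^*$ (finite sequences $\alpha_1\cdots\alpha_k$ of edges with $\mathrm{r}(\alpha_i)=\mathrm{s}(\alpha_{i+1})$, vertices as length-$0$ paths); $\mathrm{Reg}(E)$ = vertices $v$ with $\mathrm{s}^{-1}(v)$ nonempty finite. $L_R(E)$ is the $R$-algebra generated by $E^0$, $E^1$, $\{\alpha^*\}$ ($R$ commuting with generators) subject to $vv'=\delta_{v,v'}v$; $\mathrm{s}(\alpha)\alpha=\alpha\mathrm{r}(\alpha)=\alpha$, $\mathrm{r}(\alpha)\alpha^*=\alpha^*\mathrm{s}(\alpha)=\alpha^*$; $\alpha^*\alpha'=\delta_{\alpha,\alpha'}\mathrm{r}(\alpha)$; $\sum_{\mathrm{s}(\alpha)=v}\alpha\alpha^*=v$ for $v\in\mathrm{Reg}(E)$. $\mu^*=\alpha_k^*\cdots\alpha_1^*$, $v^*=v$. $M(\mathbb{Z},I)=I\times\mathbb{Z}\times I$ with $(i,a,j)(k,b,l)=(i,a+b,l)$ if $j=k$, else undefined; $S=M(\mathbb{Z},I)\cup\{0\}$ with undefined products $0$, $0$ absorbing; $(i,a,j)^{-1}=(j,-a,i)$. Canonical weight mapping: $w$ assigns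 to each vertex a weight $(i,0,i)$, to each edge a weight $(i,1,j)$, $w(\alpha^* )=w(\alpha)^{-1}$, $w(\mathrm{s}(\alpha))w(\alpha)=w(\alpha)=w(\alpha)w(\mathrm{r}(\alpha))$; for each nonzero idempotent $e$, all edges with source of weight $e$ have equal weight and all edges with range of weight $e$ have equal weight; extended by $w(\alpha_1\cdots\alpha_k)=\prod w(\alpha_i)$, $w(\mu\eta^* )=w(\mu)w(\eta)^{-1}$. Canonical $S$-grading: $(L_R(E))_s$ = $R$-span of $\mu\eta^*$ with $\mathrm{r}(\mu)=\mathrm{r}(\eta)$, $w(\mu\eta^* )=s$; $(L_R(E))_0=0$. For an $S$-graded ring $A=\bigoplus A_s$: $A_sA_t$ is the additive subgroup generated by products. $A$ is nearly epsilon-strongly graded if $S$ is cancellative ($0\ne su=tu$ or $0\ne us=ut$ implies $s=t$), satisfies (LRI) (every $s$ has $s^{-1}$ and idempotents $e,f$ with $es=sf=s$, $fs^{-1}=s^{-1}e=s^{-1}$, $ss^{-1}=e$, $s^{-1}s=f$), and for every $s$ and $x\in A_s$ there exist $\epsilon(x)\in A_sA_{s^{-1}}$, $\epsilon'(x)\in A_{s^{-1}}A_s$ with $\epsilon(x)x=x=x\epsilon'(x)$. *)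

theory Defs
  imports Main
begin

datatype 'i brandt = BZero | Br 'i int 'i

fun bmult :: "'i brandt \<Rightarrow> 'i brandt \<Rightarrow> 'i brandt" where
  "bmult (Br i a j) (Br k b l) = (if j = k then Br i (a + b) l else BZero)"
| "bmult _ _ = BZero"

fun binv :: "'i brandt \<Rightarrow> 'i brandt" where
  "binv (Br i a j) = Br j (- a) i"
| "binv BZero = BZero"

definition s_cancellative :: "('s \<Rightarrow> 's \<Rightarrow> 's) \<Rightarrow> 's \<Rightarrow> bool" where
  "s_cancellative sm sz \<longleftrightarrow>
     (\<forall>s t u. (sm s u \<noteq> sz \<and> sm s u = sm t u \<longrightarrow> s = t) \<and>
              (sm u s \<noteq> sz \<and> sm u s = sm u t \<longrightarrow> s = t))"

definition s_LRI :: "('s \<Rightarrow> 's \<Rightarrow> 's) \<Rightarrow> ('s \<Rightarrow> 's) \<Rightarrow> bool" where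
  "s_LRI sm si \<longleftrightarrow>
     (\<forall>s. \<exists>e f. sm e e = e \<and> sm f f = f \<and> sm e s = s \<and> sm s f = s \<and>
               sm f (si s) = si s \<and> sm (si s) e = si s \<and>
               sm s (si s) = e \<and> sm (si s) s = f)"

inductive_set add_subgroup_gen :: "('a \<Rightarrow> 'a \<Rightarrow> 'a) \<Rightarrow> ('a \<Rightarrow> 'a) \<Rightarrow> 'a \<Rightarrow> 'a set \<Rightarrow> 'a set"
  for add neg z P where
  asg_zero: "z \<in> add_subgroup_gen add neg z P"
| asg_gen: "x \<in> P \<Longrightarrow> x \<in> add_subgroup_gen add neg z P"
| asg_add: "x \<in> add_subgroup_gen add neg z P \<Longrightarrow> y \<in> add_subgroup_gen add neg z P
            \<Longrightarrow> add x y \<in> add_subgroup_gen add neg z P"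
| asg_neg: "x \<in> add_subgroup_gen add neg z P \<Longrightarrow> neg x \<in> add_subgroup_gen add neg z P"

definition comp_prod :: "('a \<Rightarrow> 'a \<Rightarrow> 'a) \<Rightarrow> ('a \<Rightarrow> 'a \<Rightarrow> 'a) \<Rightarrow> ('a \<Rightarrow> 'a) \<Rightarrow> 'a
     \<Rightarrow> 'a set \<Rightarrow> 'a set \<Rightarrow> 'a set" where
  "comp_prod add mul neg z As At = add_subgroup_gen add neg z {mul x y | x y. x \<in> As \<and> y \<in> At}"

definition nearly_eps_graded ::
  "('s \<Rightarrow> 's \<Rightarrow> 's) \<Rightarrow> 's \<Rightarrow> ('s \<Rightarrow> 's) \<Rightarrow>
   ('a \<Rightarrow> 'a \<Rightarrow> 'a) \<Rightarrow> ('a \<Rightarrow> 'a \<Rightarrow> 'a) \<Rightarrow> ('a \<Rightarrow> 'a) \<Rightarrow> 'a \<Rightarrow> ('s \<Rightarrow> 'a set) \<Rightarrow> bool" where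
  "nearly_eps_graded sm sz si add mul neg z A \<longleftrightarrow>
     s_cancellative sm sz \<and> s_LRI sm si \<and>
     (\<forall>s. \<forall>x\<in>A s.
        (\<exists>e\<in>comp_prod add mul neg z (A s) (A (si s)). mul e x = x) \<and>
        (\<exists>e'\<in>comp_prod add mul neg z (A (si s)) (A s). mul x e' = x))"

datatype ('v, 'e) gen = GV 'v | GE 'e | GS 'e   \<comment> \<open>vertex, edge, ghost edge alpha*\<close>

type_synonym ('v, 'e, 'r) fa = "('v, 'e) gen list \<Rightarrow> 'r"

definition gens :: "'v set \<Rightarrow> 'e set \<Rightarrow> ('v, 'e) gen set" where
  "gens V Ed = GV ` V \<union> GE ` Ed \<union> GS ` Ed"

text \<open>Finitely supported R-linear combinations of nonempty words in the generators.\<close>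
definition fa_carrier :: "'v set \<Rightarrow> 'e set \<Rightarrow> ('v, 'e, 'r::ring_1) fa set" where
  "fa_carrier V Ed = {f. finite {w. f w \<noteq> 0} \<and> f [] = 0 \<and>
                          (\<forall>w. f w \<noteq> 0 \<longrightarrow> set w \<subseteq> gens V Ed)}"

definition fa_zero :: "('v, 'e, 'r::ring_1) fa" where "fa_zero = (\<lambda>w. 0)"
definition fa_add :: "('v, 'e, 'r::ring_1) fa \<Rightarrow> ('v, 'e, 'r) fa \<Rightarrow> ('v, 'e, 'r) fa" where
  "fa_add f g = (\<lambda>w. f w + g w)"
definition fa_neg :: "('v, 'e, 'r::ring_1) fa \<Rightarrow> ('v, 'e, 'r) fa" where
  "fa_neg f = (\<lambda>w. - f w)"
definition fa_sub :: "('v, 'e, 'r::ring_1) fa \<Rightarrow> ('v, 'e, 'r) fa \<Rightarrow> ('v, 'e, 'r) fa" where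
  "fa_sub f g = (\<lambda>w. f w - g w)"
definition fa_mult :: "('v, 'e, 'r::ring_1) fa \<Rightarrow> ('v, 'e, 'r) fa \<Rightarrow> ('v, 'e, 'r) fa" where
  "fa_mult f g = (\<lambda>w. \<Sum>i\<le>length w. f (take i w) * g (drop i w))"
definition fa_lsmul :: "'r::ring_1 \<Rightarrow> ('v, 'e, 'r) fa \<Rightarrow> ('v, 'e, 'r) fa" where
  "fa_lsmul c f = (\<lambda>w. c * f w)"
definition fa_rsmul :: "('v, 'e, 'r::ring_1) fa \<Rightarrow> 'r \<Rightarrow> ('v, 'e, 'r) fa" where
  "fa_rsmul f c = (\<lambda>w. f w * c)"
definition mono :: "('v, 'e) gen list \<Rightarrow> 'r::ring_1 \<Rightarrow> ('v, 'e, 'r) fa" where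
  "mono w c = (\<lambda>u. if u = w then c else 0)"

definition lpa_reg :: "'v set \<Rightarrow> 'e set \<Rightarrow> ('e \<Rightarrow> 'v) \<Rightarrow> 'v set" where
  "lpa_reg V Ed s = {v \<in> V. {a \<in> Ed. s a = v} \<noteq> {} \<and> finite {a \<in> Ed. s a = v}}"

definition lpa_rels :: "'v set \<Rightarrow> 'e set \<Rightarrow> ('e \<Rightarrow> 'v) \<Rightarrow> ('e \<Rightarrow> 'v) \<Rightarrow> ('v, 'e, 'r::ring_1) fa set" where
  "lpa_rels V Ed s r =
     {fa_sub (mono [GV v, GV v'] 1) (if v = v' then mono [GV v] 1 else fa_zero) | v v'. v \<in> V \<and> v' \<in> V}
   \<union> {fa_sub (mono [GV (s a), GE a] 1) (mono [GE a] 1) | a. a \<in> Ed}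
   \<union> {fa_sub (mono [GE a, GV (r a)] 1) (mono [GE a] 1) | a. a \<in> Ed}
   \<union> {fa_sub (mono [GV (r a), GS a] 1) (mono [GS a] 1) | a. a \<in> Ed}
   \<union> {fa_sub (mono [GS a, GV (s a)] 1) (mono [GS a] 1) | a. a \<in> Ed}
   \<union> {fa_sub (mono [GS a, GE a'] 1) (if a = a' then mono [GV (r a)] 1 else fa_zero) | a a'. a \<in> Ed \<and> a' \<in> Ed}
   \<union> {fa_sub (\<lambda>w. \<Sum>a\<in>{a \<in> Ed. s a = v}. mono [GE a, GS a] 1 w) (mono [GV v] 1) | v. v \<in> lpa_reg V Ed s}"

inductive_set lpa_ideal :: "'v set \<Rightarrow> 'e set \<Rightarrow> ('e \<Rightarrow> 'v) \<Rightarrow> ('e \<Rightarrow> 'v) \<Rightarrow> ('v, 'e, 'r::ring_1) fa set"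
  for V Ed s r where
  li_rel: "f \<in> lpa_rels V Ed s r \<Longrightarrow> f \<in> lpa_ideal V Ed s r"
| li_zero: "fa_zero \<in> lpa_ideal V Ed s r"
| li_add: "f \<in> lpa_ideal V Ed s r \<Longrightarrow> g \<in> lpa_ideal V Ed s r \<Longrightarrow> fa_add f g \<in> lpa_ideal V Ed s r"
| li_lsmul: "f \<in> lpa_ideal V Ed s r \<Longrightarrow> fa_lsmul c f \<in> lpa_ideal V Ed s r"
| li_rsmul: "f \<in> lpa_ideal V Ed s r \<Longrightarrow> fa_rsmul f c \<in> lpa_ideal V Ed s r"
| li_lmult: "a \<in> fa_carrier V Ed \<Longrightarrow> f \<in> lpa_ideal V Ed s r \<Longrightarrow> fa_mult a f \<in> lpa_ideal V Ed s r"
| li_rmult: "a \<in> fa_carrier V Ed \<Longrightarrow> f \<in> lpa_ideal V Ed s r \<Longrightarrow> fa_mult f a \<in> lpa_ideal V Ed s r"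

text \<open>Elements of L_R(E) are the cosets f + J (J = lpa_ideal) of elements f of the free algebra.\<close>
definition lpa_class :: "'v set \<Rightarrow> 'e set \<Rightarrow> ('e \<Rightarrow> 'v) \<Rightarrow> ('e \<Rightarrow> 'v) \<Rightarrow> ('v, 'e, 'r::ring_1) fa
    \<Rightarrow> ('v, 'e, 'r) fa set" where
  "lpa_class V Ed s r f = {g \<in> fa_carrier V Ed. fa_sub g f \<in> lpa_ideal V Ed s r}"

definition lpa_carrier :: "'v set \<Rightarrow> 'e set \<Rightarrow> ('e \<Rightarrow> 'v) \<Rightarrow> ('e \<Rightarrow> 'v) \<Rightarrow> ('v, 'e, 'r::ring_1) fa set set" where
  "lpa_carrier V Ed s r = lpa_class V Ed s r ` fa_carrier V Ed"

definition rep :: "'a set \<Rightarrow> 'a" where "rep X = (SOME f. f \<in> X)"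

definition lpa_zero :: "'v set \<Rightarrow> 'e set \<Rightarrow> ('e \<Rightarrow> 'v) \<Rightarrow> ('e \<Rightarrow> 'v) \<Rightarrow> ('v, 'e, 'r::ring_1) fa set" where
  "lpa_zero V Ed s r = lpa_class V Ed s r fa_zero"
definition lpa_add :: "'v set \<Rightarrow> 'e set \<Rightarrow> ('e \<Rightarrow> 'v) \<Rightarrow> ('e \<Rightarrow> 'v)
    \<Rightarrow> ('v, 'e, 'r::ring_1) fa set \<Rightarrow> ('v, 'e, 'r) fa set \<Rightarrow> ('v, 'e, 'r) fa set" where
  "lpa_add V Ed s r X Y = lpa_class V Ed s r (fa_add (rep X) (rep Y))"
definition lpa_neg :: "'v set \<Rightarrow> 'e set \<Rightarrow> ('e \<Rightarrow> 'v) \<Rightarrow> ('e \<Rightarrow> 'v)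
    \<Rightarrow> ('v, 'e, 'r::ring_1) fa set \<Rightarrow> ('v, 'e, 'r) fa set" where
  "lpa_neg V Ed s r X = lpa_class V Ed s r (fa_neg (rep X))"
definition lpa_mult :: "'v set \<Rightarrow> 'e set \<Rightarrow> ('e \<Rightarrow> 'v) \<Rightarrow> ('e \<Rightarrow> 'v)
    \<Rightarrow> ('v, 'e, 'r::ring_1) fa set \<Rightarrow> ('v, 'e, 'r) fa set \<Rightarrow> ('v, 'e, 'r) fa set" where
  "lpa_mult V Ed s r X Y = lpa_class V Ed s r (fa_mult (rep X) (rep Y))"

datatype ('v, 'e) path = PV 'v | PE "'e list"   \<comment> \<open>length-0 path (vertex) or nonempty edge list\<close>

fun is_path :: "'v set \<Rightarrow> 'e set \<Rightarrow> ('e \<Rightarrow> 'v) \<Rightarrow> ('e \<Rightarrow> 'v) \<Rightarrow> ('v, 'e) path \<Rightarrow> bool" where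
  "is_path V Ed s r (PV v) \<longleftrightarrow> v \<in> V"
| "is_path V Ed s r (PE es) \<longleftrightarrow> es \<noteq> [] \<and> set es \<subseteq> Ed \<and>
      (\<forall>i. Suc i < length es \<longrightarrow> r (es ! i) = s (es ! Suc i))"

fun p_range :: "('e \<Rightarrow> 'v) \<Rightarrow> ('v, 'e) path \<Rightarrow> 'v" where
  "p_range r (PV v) = v"
| "p_range r (PE es) = r (last es)"

fun p_word :: "('v, 'e) path \<Rightarrow> ('v, 'e) gen list" where
  "p_word (PV v) = [GV v]"
| "p_word (PE es) = map GE es"

fun p_ghost_word :: "('v, 'e) path \<Rightarrow> ('v, 'e) gen list" where
  "p_ghost_word (PV v) = [GV v]"
| "p_ghost_word (PE es) = rev (map GS es)"

fun edges_weight :: "('e \<Rightarrow> 'i brandt) \<Rightarrow> 'e list \<Rightarrow> 'i brandt" where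
  "edges_weight we [] = BZero"
| "edges_weight we [a] = we a"
| "edges_weight we (a # b # l) = bmult (we a) (edges_weight we (b # l))"

fun p_weight :: "('v \<Rightarrow> 'i brandt) \<Rightarrow> ('e \<Rightarrow> 'i brandt) \<Rightarrow> ('v, 'e) path \<Rightarrow> 'i brandt" where
  "p_weight wv we (PV v) = wv v"
| "p_weight wv we (PE es) = edges_weight we es"

definition canonical_weight :: "'v set \<Rightarrow> 'e set \<Rightarrow> ('e \<Rightarrow> 'v) \<Rightarrow> ('e \<Rightarrow> 'v)
    \<Rightarrow> ('v \<Rightarrow> 'i brandt) \<Rightarrow> ('e \<Rightarrow> 'i brandt) \<Rightarrow> bool" where
  "canonical_weight V Ed s r wv we \<longleftrightarrow>
     (\<forall>v\<in>V. \<exists>i. wv v = Br i 0 i) \<and>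
     (\<forall>a\<in>Ed. \<exists>i j. we a = Br i 1 j) \<and>
     (\<forall>a\<in>Ed. bmult (wv (s a)) (we a) = we a \<and> bmult (we a) (wv (r a)) = we a) \<and>
     (\<forall>e. e \<noteq> BZero \<and> bmult e e = e \<longrightarrow>
        (\<forall>a\<in>Ed. \<forall>b\<in>Ed. wv (s a) = e \<and> wv (s b) = e \<longrightarrow> we a = we b) \<and>
        (\<forall>a\<in>Ed. \<forall>b\<in>Ed. wv (r a) = e \<and> wv (r b) = e \<longrightarrow> we a = we b))"

text \<open>R-span (in the free algebra) of the words mu eta* with r(mu) = r(eta) and weight sigma;
  empty (only 0) for sigma = 0.\<close>
inductive_set lpa_span :: "'v set \<Rightarrow> 'e set \<Rightarrow> ('e \<Rightarrow> 'v) \<Rightarrow> ('e \<Rightarrow> 'v)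
    \<Rightarrow> ('v \<Rightarrow> 'i brandt) \<Rightarrow> ('e \<Rightarrow> 'i brandt) \<Rightarrow> 'i brandt \<Rightarrow> ('v, 'e, 'r::ring_1) fa set"
  for V Ed s r wv we \<sigma> where
  ls_zero: "fa_zero \<in> lpa_span V Ed s r wv we \<sigma>"
| ls_step: "\<sigma> \<noteq> BZero \<Longrightarrow> is_path V Ed s r \<mu> \<Longrightarrow> is_path V Ed s r \<eta> \<Longrightarrow> p_range r \<mu> = p_range r \<eta>
     \<Longrightarrow> bmult (p_weight wv we \<mu>) (binv (p_weight wv we \<eta>)) = \<sigma>
     \<Longrightarrow> f \<in> lpa_span V Ed s r wv we \<sigma>
     \<Longrightarrow> fa_add (mono (p_word \<mu> @ p_ghost_word \<eta>) c) f \<in> lpa_span V Ed s r wv we \<sigma>"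

definition lpa_comp :: "'v set \<Rightarrow> 'e set \<Rightarrow> ('e \<Rightarrow> 'v) \<Rightarrow> ('e \<Rightarrow> 'v)
    \<Rightarrow> ('v \<Rightarrow> 'i brandt) \<Rightarrow> ('e \<Rightarrow> 'i brandt) \<Rightarrow> 'i brandt \<Rightarrow> ('v, 'e, 'r::ring_1) fa set set" where
  "lpa_comp V Ed s r wv we \<sigma> = lpa_class V Ed s r ` lpa_span V Ed s r wv we \<sigma>"

end

theory Submission
  imports Defs
begin

lemma mono_mult: "fa_mult (mono u c) (mono w d) = mono (u @ w) (c * d)"
proof (rule ext)
  fix z
  have "fa_mult (mono u c) (mono w d) z = (\<Sum>i\<le>length z. if i = length u then (if z = u @ w then c*d else 0) else 0)"
    unfolding fa_mult_def mono_def
  proof (rule sum.cong[OF refl])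
    fix i assume i: "i \<in> {..length z}"
    show "(if take i z = u then c else 0) * (if drop i z = w then d else 0) =
        (if i = length u then (if z = u @ w then c*d else 0) else 0)"
    proof (cases "take i z = u \<and> drop i z = w")
      case True
      then have "z = u @ w" by (metis append_take_drop_id)
      moreover have "i = length u" using True i by auto
      ultimately show ?thesis using True by simp
    next
      case False
      then have "\<not> (i = length u \<and> z = u @ w)" by auto
      then have "(if i = length u then (if z = u @ w then c*d else 0) else 0) = 0" by auto
      moreover have "(if take i z = u then c else 0) * (if drop i z = w then d else 0) = 0"
        using False by auto
      ultimately show ?thesis by simp
    qed
  qed
  also have "\<dots> = mono (u @ w) (c * d) z"
    by (subst sum.delta) (auto simp: mono_def)
  finally show "fa_mult (mono u c) (mono w d) z = mono (u @ w) (c * d) z" .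
qed


lemma fa_mult_add_left: "fa_mult (fa_add f g) h = fa_add (fa_mult f h) (fa_mult g h)"
  by (rule ext) (simp add: fa_mult_def fa_add_def distrib_right sum.distrib)
lemma fa_mult_add_right: "fa_mult h (fa_add f g) = fa_add (fa_mult h f) (fa_mult h g)"
  by (rule ext) (simp add: fa_mult_def fa_add_def distrib_left sum.distrib)
lemma fa_mult_sub_left: "fa_mult (fa_sub f g) h = fa_sub (fa_mult f h) (fa_mult g h)"
  by (rule ext) (simp add: fa_mult_def fa_sub_def left_diff_distrib sum_subtractf)
lemma fa_mult_sub_right: "fa_mult h (fa_sub f g) = fa_sub (fa_mult h f) (fa_mult h g)"
  by (rule ext) (simp add: fa_mult_def fa_sub_def right_diff_distrib sum_subtractf)
lemma fa_mult_zero_left: "fa_mult fa_zero h = fa_zero"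
  by (rule ext) (simp add: fa_mult_def fa_zero_def)
lemma fa_mult_zero_right: "fa_mult h fa_zero = fa_zero"
  by (rule ext) (simp add: fa_mult_def fa_zero_def)

lemma mono_lsmul: "mono u c = fa_lsmul c (mono u 1)"
  by (rule ext) (simp add: mono_def fa_lsmul_def)

definition fsum :: "'a set \<Rightarrow> ('a \<Rightarrow> ('v, 'e, 'r::ring_1) fa) \<Rightarrow> ('v, 'e, 'r) fa" where
  "fsum P g = (\<lambda>w. \<Sum>m\<in>P. g m w)"

lemma fsum_empty[simp]: "fsum {} g = fa_zero"
  by (simp add: fsum_def fa_zero_def)
lemma fsum_insert: "finite F \<Longrightarrow> x \<notin> F \<Longrightarrow> fsum (insert x F) g = fa_add (g x) (fsum F g)"
  by (rule ext) (simp add: fsum_def fa_add_def)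
lemma fsum_mult_left: "fa_mult (fsum P g) h = fsum P (\<lambda>m. fa_mult (g m) h)"
  apply (rule ext)
  apply (simp add: fsum_def fa_mult_def sum_distrib_right)
  by (rule sum.swap)
lemma fsum_mult_right: "fa_mult h (fsum P g) = fsum P (\<lambda>m. fa_mult h (g m))"
  apply (rule ext)
  apply (simp add: fsum_def fa_mult_def sum_distrib_left)
  by (rule sum.swap)
lemma fsum_single:
  assumes "finite P" "m0 \<in> P" "\<And>m. m \<in> P \<Longrightarrow> m \<noteq> m0 \<Longrightarrow> g m = fa_zero"
  shows "fsum P g = g m0"
proof (rule ext)
  fix w
  have "(\<Sum>m\<in>P. g m w) = g m0 w + (\<Sum>m\<in>P - {m0}. g m w)"
    using assms(1,2) by (simp add: sum.remove)
  also have "(\<Sum>m\<in>P - {m0}. g m w) = 0"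
    using assms(3) by (intro sum.neutral) (auto simp: fa_zero_def)
  finally show "fsum P g w = g m0 w" by (simp add: fsum_def)
qed

lemma fa_carrier_iff: "f \<in> fa_carrier V Ed \<longleftrightarrow> finite {w. f w \<noteq> 0} \<and> f [] = 0 \<and>
                          (\<forall>w. f w \<noteq> 0 \<longrightarrow> set w \<subseteq> gens V Ed)"
  by (simp add: fa_carrier_def)

lemma zero_carrier[simp]: "fa_zero \<in> fa_carrier V Ed"
  by (simp add: fa_carrier_def fa_zero_def)

lemma add_carrier: "f \<in> fa_carrier V Ed \<Longrightarrow> g \<in> fa_carrier V Ed \<Longrightarrow> fa_add f g \<in> fa_carrier V Ed"
proof -
  assume f: "f \<in> fa_carrier V Ed" and g: "g \<in> fa_carrier V Ed"
  have "{w. fa_add f g w \<noteq> 0} \<subseteq> {w. f w \<noteq> 0} \<union> {w. g w \<noteq> 0}"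
    by (auto simp: fa_add_def)
  then have "finite {w. fa_add f g w \<noteq> 0}"
    using f g by (auto simp: fa_carrier_def intro: finite_subset)
  moreover have "set w \<subseteq> gens V Ed" if "fa_add f g w \<noteq> 0" for w
  proof -
    have "f w \<noteq> 0 \<or> g w \<noteq> 0" using that by (auto simp: fa_add_def)
    then show ?thesis using f g by (auto simp: fa_carrier_def)
  qed
  ultimately show ?thesis using f g by (auto simp: fa_carrier_def fa_add_def)
qed

lemma mono_carrier: "u \<noteq> [] \<Longrightarrow> set u \<subseteq> gens V Ed \<Longrightarrow> mono u c \<in> fa_carrier V Ed"
proof -
  assume "u \<noteq> []" "set u \<subseteq> gens V Ed"
  moreover have "{w. mono u c w \<noteq> 0} \<subseteq> {u}" by (auto simp: mono_def)
  ultimately show ?thesis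
    by (auto simp: fa_carrier_def mono_def intro: finite_subset)
qed

lemma mult_carrier: "f \<in> fa_carrier V Ed \<Longrightarrow> g \<in> fa_carrier V Ed \<Longrightarrow> fa_mult f g \<in> fa_carrier V Ed"
proof -
  assume f: "f \<in> fa_carrier V Ed" and g: "g \<in> fa_carrier V Ed"
  have key: "\<exists>i. f (take i w) \<noteq> 0 \<and> g (drop i w) \<noteq> 0" if "fa_mult f g w \<noteq> 0" for w
  proof -
    from that obtain i where "f (take i w) * g (drop i w) \<noteq> 0"
      unfolding fa_mult_def by (meson sum.not_neutral_contains_not_neutral)
    then show ?thesis by (metis mult_zero_left mult_zero_right)
  qed
  have "{w. fa_mult f g w \<noteq> 0} \<subseteq> (\<lambda>(u, v). u @ v) ` ({w. f w \<noteq> 0} \<times> {w. g w \<noteq> 0})"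
  proof
    fix w assume "w \<in> {w. fa_mult f g w \<noteq> 0}"
    then obtain i where "f (take i w) \<noteq> 0 \<and> g (drop i w) \<noteq> 0" using key by auto
    then show "w \<in> (\<lambda>(u, v). u @ v) ` ({w. f w \<noteq> 0} \<times> {w. g w \<noteq> 0})"
      by (intro image_eqI[where x="(take i w, drop i w)"]) auto
  qed
  moreover have "finite ((\<lambda>(u, v). u @ v) ` ({w. f w \<noteq> 0} \<times> {w. g w \<noteq> 0}))"
    using f g by (auto simp: fa_carrier_def)
  ultimately have fin: "finite {w. fa_mult f g w \<noteq> 0}" by (rule finite_subset)
  have nil: "fa_mult f g [] = 0" using f by (simp add: fa_mult_def fa_carrier_def)
  have "set w \<subseteq> gens V Ed" if nz: "fa_mult f g w \<noteq> 0" for w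
  proof -
    obtain i where i: "f (take i w) \<noteq> 0 \<and> g (drop i w) \<noteq> 0" using key[OF nz] by blast
    then have "set (take i w) \<subseteq> gens V Ed" "set (drop i w) \<subseteq> gens V Ed"
      using f g by (auto simp: fa_carrier_def)
    then show ?thesis by (metis append_take_drop_id set_append le_sup_iff)
  qed
  then show ?thesis using fin nil by (simp add: fa_carrier_def)
qed

lemma fsum_carrier: "finite P \<Longrightarrow> (\<And>m. m \<in> P \<Longrightarrow> g m \<in> fa_carrier V Ed) \<Longrightarrow> fsum P g \<in> fa_carrier V Ed"
  by (induction P rule: finite_induct) (auto simp: fsum_insert add_carrier)

locale lpa_ctx =
  fixes V :: "'v set" and Ed :: "'e set" and s r :: "'e \<Rightarrow> 'v"
  assumes sV: "s ` Ed \<subseteq> V" and rV: "r ` Ed \<subseteq> V"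
begin

abbreviation C where "C \<equiv> fa_carrier V Ed"
abbreviation J where "J \<equiv> lpa_ideal V Ed s r"
abbreviation G where "G \<equiv> gens V Ed"

definition cong :: "('v, 'e, 'r::ring_1) fa \<Rightarrow> ('v, 'e, 'r) fa \<Rightarrow> bool" where
  "cong f g \<longleftrightarrow> fa_sub f g \<in> J"

lemma cong_refl: "cong f f"
proof -
  have "fa_sub f f = fa_zero" by (rule ext) (simp add: fa_sub_def fa_zero_def)
  then show ?thesis by (simp add: cong_def lpa_ideal.li_zero)
qed

lemma cong_sym: "cong f g \<Longrightarrow> cong g f"
proof -
  assume "cong f g"
  then have "fa_lsmul (-1) (fa_sub f g) \<in> J" unfolding cong_def by (rule lpa_ideal.li_lsmul)
  moreover have "fa_lsmul (-1) (fa_sub f g) = fa_sub g f"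
    by (rule ext) (simp add: fa_sub_def fa_lsmul_def)
  ultimately show ?thesis by (simp add: cong_def)
qed

lemma cong_trans: "cong f g \<Longrightarrow> cong g h \<Longrightarrow> cong f h"
proof -
  assume "cong f g" "cong g h"
  then have "fa_add (fa_sub f g) (fa_sub g h) \<in> J" unfolding cong_def by (rule lpa_ideal.li_add)
  moreover have "fa_add (fa_sub f g) (fa_sub g h) = fa_sub f h"
    by (rule ext) (simp add: fa_sub_def fa_add_def)
  ultimately show ?thesis by (simp add: cong_def)
qed

lemma cong_add: "cong f f' \<Longrightarrow> cong g g' \<Longrightarrow> cong (fa_add f g) (fa_add f' g')"
proof -
  assume "cong f f'" "cong g g'"
  then have "fa_add (fa_sub f f') (fa_sub g g') \<in> J" unfolding cong_def by (rule lpa_ideal.li_add)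
  moreover have "fa_add (fa_sub f f') (fa_sub g g') = fa_sub (fa_add f g) (fa_add f' g')"
    by (rule ext) (simp add: fa_sub_def fa_add_def)
  ultimately show ?thesis by (simp add: cong_def)
qed

lemma cong_lsmul: "cong f g \<Longrightarrow> cong (fa_lsmul c f) (fa_lsmul c g)"
proof -
  assume "cong f g"
  then have "fa_lsmul c (fa_sub f g) \<in> J" unfolding cong_def by (rule lpa_ideal.li_lsmul)
  moreover have "fa_lsmul c (fa_sub f g) = fa_sub (fa_lsmul c f) (fa_lsmul c g)"
    by (rule ext) (simp add: fa_sub_def fa_lsmul_def right_diff_distrib)
  ultimately show ?thesis by (simp add: cong_def)
qed

lemma cong_lmult: "a \<in> C \<Longrightarrow> cong f g \<Longrightarrow> cong (fa_mult a f) (fa_mult a g)"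
  unfolding cong_def fa_mult_sub_right[symmetric] by (rule lpa_ideal.li_lmult)

lemma cong_rmult: "a \<in> C \<Longrightarrow> cong f g \<Longrightarrow> cong (fa_mult f a) (fa_mult g a)"
  unfolding cong_def fa_mult_sub_left[symmetric] by (rule lpa_ideal.li_rmult)

lemma cong_fsum: "finite P \<Longrightarrow> (\<And>m. m \<in> P \<Longrightarrow> cong (g m) (h m)) \<Longrightarrow> cong (fsum P g) (fsum P h)"
  by (induction P rule: finite_induct) (auto simp: fsum_insert cong_add cong_refl)

lemma cong_zero_iff: "cong f fa_zero \<longleftrightarrow> f \<in> J"
proof -
  have "fa_sub f fa_zero = f" by (rule ext) (simp add: fa_sub_def fa_zero_def)
  then show ?thesis by (simp add: cong_def)
qed

lemma cong_add_zero: "cong f g \<Longrightarrow> cong (fa_add f fa_zero) g"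
proof -
  have "fa_add f fa_zero = f" by (rule ext) (simp add: fa_add_def fa_zero_def)
  then show "cong f g \<Longrightarrow> cong (fa_add f fa_zero) g" by simp
qed

abbreviation cls where "cls \<equiv> lpa_class V Ed s r"

lemma in_cls: "f \<in> C \<Longrightarrow> f \<in> cls f"
  by (simp add: lpa_class_def cong_refl[unfolded cong_def])

lemma rep_cls: "f \<in> C \<Longrightarrow> rep (cls f) \<in> C \<and> cong (rep (cls f)) f"
proof -
  assume "f \<in> C"
  then have "f \<in> cls f" by (rule in_cls)
  then have "rep (cls f) \<in> cls f" unfolding rep_def by (metis someI)
  then show ?thesis by (simp add: lpa_class_def cong_def)
qed

lemma cls_alt: "cls f = {h \<in> C. cong h f}"
  by (simp add: lpa_class_def cong_def)

lemma cls_eq: "cong f g \<Longrightarrow> cls f = cls g"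
proof -
  assume fg: "cong f g"
  have "cong h f \<longleftrightarrow> cong h g" for h
    using fg cong_sym cong_trans by metis
  then show ?thesis unfolding cls_alt by simp
qed

lemma add_cls: "f \<in> C \<Longrightarrow> g \<in> C \<Longrightarrow> lpa_add V Ed s r (cls f) (cls g) = cls (fa_add f g)"
proof -
  assume f: "f \<in> C" and g: "g \<in> C"
  have "cong (fa_add (rep (cls f)) (rep (cls g))) (fa_add f g)"
    using rep_cls[OF f] rep_cls[OF g] by (simp add: cong_add)
  then show ?thesis unfolding lpa_add_def by (rule cls_eq)
qed

lemma mult_cls: "f \<in> C \<Longrightarrow> g \<in> C \<Longrightarrow> lpa_mult V Ed s r (cls f) (cls g) = cls (fa_mult f g)"
proof -
  assume f: "f \<in> C" and g: "g \<in> C"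
  let ?f = "rep (cls f)" and ?g = "rep (cls g)"
  have f': "?f \<in> C" "cong ?f f" and g': "?g \<in> C" "cong ?g g" using rep_cls f g by auto
  have "cong (fa_mult ?f ?g) (fa_mult f ?g)" by (rule cong_rmult[OF g'(1) f'(2)])
  moreover have "cong (fa_mult f ?g) (fa_mult f g)" by (rule cong_lmult[OF f g'(2)])
  ultimately show ?thesis unfolding lpa_mult_def by (intro cls_eq) (rule cong_trans)
qed

end

lemma all_nat_split: "(\<forall>i::nat. P i) \<longleftrightarrow> P 0 \<and> (\<forall>i. P (Suc i))"
  by (metis nat.exhaust)

lemma is_path_Cons2: "is_path V Ed s r (PE (a # b # l)) \<longleftrightarrow> a \<in> Ed \<and> r a = s b \<and> is_path V Ed s r (PE (b # l))"
  apply (simp only: is_path.simps)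
  apply (subst (1) all_nat_split)
  apply auto
  done

context lpa_ctx begin

definition wc :: "'r::ring_1 \<Rightarrow> ('v, 'e) gen list \<Rightarrow> ('v, 'e) gen list \<Rightarrow> bool" where
  "wc c u w \<longleftrightarrow> cong (mono u c) (mono w c)"
definition wz :: "'r::ring_1 \<Rightarrow> ('v, 'e) gen list \<Rightarrow> bool" where
  "wz c u \<longleftrightarrow> mono u c \<in> J"

lemma wc_refl: "wc c u u" by (simp add: wc_def cong_refl)
lemma wc_sym: "wc c u w \<Longrightarrow> wc c w u" by (simp add: wc_def cong_sym)
lemma wc_trans: "wc c u w \<Longrightarrow> wc c w x \<Longrightarrow> wc c u x" unfolding wc_def by (rule cong_trans)
lemma wz_wc: "wc c u w \<Longrightarrow> wz c w \<Longrightarrow> wz c u"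
  unfolding wc_def wz_def cong_zero_iff[symmetric] by (rule cong_trans)

lemma wc_left: "set x \<subseteq> G \<Longrightarrow> wc c u w \<Longrightarrow> wc c (x @ u) (x @ w)"
proof (cases "x = []")
  case False
  assume x: "set x \<subseteq> G" and uw: "wc c u w"
  have "cong (fa_mult (mono x 1) (mono u c)) (fa_mult (mono x 1) (mono w c))"
    using uw False x by (intro cong_lmult mono_carrier) (auto simp: wc_def)
  then show ?thesis by (simp add: mono_mult wc_def)
qed simp

lemma wc_right: "set x \<subseteq> G \<Longrightarrow> wc c u w \<Longrightarrow> wc c (u @ x) (w @ x)"
proof (cases "x = []")
  case False
  assume x: "set x \<subseteq> G" and uw: "wc c u w"
  have "cong (fa_mult (mono u c) (mono x 1)) (fa_mult (mono w c) (mono x 1))"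
    using uw False x by (intro cong_rmult mono_carrier) (auto simp: wc_def)
  then show ?thesis by (simp add: mono_mult wc_def)
qed simp

lemma wc_ctx: "set x \<subseteq> G \<Longrightarrow> set y \<subseteq> G \<Longrightarrow> wc c u w \<Longrightarrow> wc c (x @ u @ y) (x @ w @ y)"
  by (intro wc_left wc_right)

lemma wz_left: "set x \<subseteq> G \<Longrightarrow> wz c u \<Longrightarrow> wz c (x @ u)"
proof (cases "x = []")
  case False
  assume x: "set x \<subseteq> G" and u: "wz c u"
  have "cong (fa_mult (mono x 1) (mono u c)) (fa_mult (mono x 1) fa_zero)"
    using u False x by (intro cong_lmult mono_carrier) (auto simp: wz_def cong_zero_iff)
  then show ?thesis by (simp add: mono_mult wz_def fa_mult_zero_right cong_zero_iff)
qed simp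

lemma wz_right: "set x \<subseteq> G \<Longrightarrow> wz c u \<Longrightarrow> wz c (u @ x)"
proof (cases "x = []")
  case False
  assume x: "set x \<subseteq> G" and u: "wz c u"
  have "cong (fa_mult (mono u c) (mono x 1)) (fa_mult fa_zero (mono x 1))"
    using u False x by (intro cong_rmult mono_carrier) (auto simp: wz_def cong_zero_iff)
  then show ?thesis by (simp add: mono_mult wz_def fa_mult_zero_left cong_zero_iff)
qed simp

lemma wz_ctx: "set x \<subseteq> G \<Longrightarrow> set y \<subseteq> G \<Longrightarrow> wz c u \<Longrightarrow> wz c (x @ u @ y)"
  by (intro wz_left wz_right)

lemma rel_wc: fixes c :: "'r::ring_1"
  shows "fa_sub (mono u (1::'r)) (mono w 1) \<in> lpa_rels V Ed s r \<Longrightarrow> wc c u w"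
proof -
  assume "fa_sub (mono u (1::'r)) (mono w 1) \<in> lpa_rels V Ed s r"
  then have "cong (mono u (1::'r)) (mono w 1)" unfolding cong_def by (rule lpa_ideal.li_rel)
  then have "cong (fa_lsmul c (mono u 1)) (fa_lsmul c (mono w 1))" by (rule cong_lsmul)
  then show ?thesis by (simp add: wc_def mono_lsmul[symmetric])
qed

lemma rel_wz: fixes c :: "'r::ring_1"
  shows "fa_sub (mono u (1::'r)) fa_zero \<in> lpa_rels V Ed s r \<Longrightarrow> wz c u"
proof -
  assume "fa_sub (mono u (1::'r)) fa_zero \<in> lpa_rels V Ed s r"
  then have "fa_sub (mono u (1::'r)) fa_zero \<in> J" by (rule lpa_ideal.li_rel)
  then have "mono u (1::'r) \<in> J" using cong_zero_iff unfolding cong_def by metis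
  then have "fa_lsmul c (mono u 1) \<in> J" by (rule lpa_ideal.li_lsmul)
  then show ?thesis by (simp add: wz_def mono_lsmul[symmetric])
qed

lemma gens_simps[simp]: "GV v \<in> G \<longleftrightarrow> v \<in> V" "GE a \<in> G \<longleftrightarrow> a \<in> Ed" "GS a \<in> G \<longleftrightarrow> a \<in> Ed"
  by (auto simp: gens_def)

lemma sV': "a \<in> Ed \<Longrightarrow> s a \<in> V" using sV by auto
lemma rV': "a \<in> Ed \<Longrightarrow> r a \<in> V" using rV by auto

lemma R_vv: "v \<in> V \<Longrightarrow> set x \<subseteq> G \<Longrightarrow> set y \<subseteq> G \<Longrightarrow> wc c (x @ GV v # GV v # y) (x @ GV v # y)"
proof -
  assume "v \<in> V" "set x \<subseteq> G" "set y \<subseteq> G"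
  moreover have "wc c [GV v, GV v] [GV v]"
    apply (rule rel_wc)
    apply (unfold lpa_rels_def)
    apply (intro UnI1)
    apply (rule CollectI)
    apply (rule exI[of _ v], rule exI[of _ v])
    using \<open>v \<in> V\<close> by simp
  ultimately show ?thesis using wc_ctx[of x y c "[GV v, GV v]" "[GV v]"] by simp
qed

lemma R_vv': "v \<in> V \<Longrightarrow> v' \<in> V \<Longrightarrow> v \<noteq> v' \<Longrightarrow> set x \<subseteq> G \<Longrightarrow> set y \<subseteq> G \<Longrightarrow> wz c (x @ GV v # GV v' # y)"
proof -
  assume "v \<in> V" "v' \<in> V" "v \<noteq> v'" "set x \<subseteq> G" "set y \<subseteq> G"
  moreover have "wz c [GV v, GV v']"
    apply (rule rel_wz) apply (unfold lpa_rels_def) apply (rule UnI1) apply (rule UnI1) apply (rule UnI1) apply (rule UnI1) apply (rule UnI1) apply (rule UnI1) apply (rule CollectI) apply (rule exI[of _ v]) apply (rule exI[of _ v']) using \<open>v \<in> V\<close> \<open>v' \<in> V\<close> \<open>v \<noteq> v'\<close> by simp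
  ultimately show ?thesis using wz_ctx[of x y c "[GV v, GV v']"] by simp
qed

lemma R_sE: "a \<in> Ed \<Longrightarrow> set x \<subseteq> G \<Longrightarrow> set y \<subseteq> G \<Longrightarrow> wc c (x @ GV (s a) # GE a # y) (x @ GE a # y)"
proof -
  assume "a \<in> Ed" "set x \<subseteq> G" "set y \<subseteq> G"
  moreover have "wc c [GV (s a), GE a] [GE a]"
    apply (rule rel_wc) apply (unfold lpa_rels_def) apply (rule UnI1) apply (rule UnI1) apply (rule UnI1) apply (rule UnI1) apply (rule UnI1) apply (rule UnI2) apply (rule CollectI) apply (rule exI[of _ a]) using \<open>a \<in> Ed\<close> by simp
  ultimately show ?thesis using wc_ctx[of x y c "[GV (s a), GE a]" "[GE a]"] by simp
qed

lemma R_Er: "a \<in> Ed \<Longrightarrow> set x \<subseteq> G \<Longrightarrow> set y \<subseteq> G \<Longrightarrow> wc c (x @ GE a # GV (r a) # y) (x @ GE a # y)"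
proof -
  assume "a \<in> Ed" "set x \<subseteq> G" "set y \<subseteq> G"
  moreover have "wc c [GE a, GV (r a)] [GE a]"
    apply (rule rel_wc) apply (unfold lpa_rels_def) apply (rule UnI1) apply (rule UnI1) apply (rule UnI1) apply (rule UnI1) apply (rule UnI2) apply (rule CollectI) apply (rule exI[of _ a]) using \<open>a \<in> Ed\<close> by simp
  ultimately show ?thesis using wc_ctx[of x y c "[GE a, GV (r a)]" "[GE a]"] by simp
qed

lemma R_rS: "a \<in> Ed \<Longrightarrow> set x \<subseteq> G \<Longrightarrow> set y \<subseteq> G \<Longrightarrow> wc c (x @ GV (r a) # GS a # y) (x @ GS a # y)"
proof -
  assume "a \<in> Ed" "set x \<subseteq> G" "set y \<subseteq> G"
  moreover have "wc c [GV (r a), GS a] [GS a]"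
    apply (rule rel_wc) apply (unfold lpa_rels_def) apply (rule UnI1) apply (rule UnI1) apply (rule UnI1) apply (rule UnI2) apply (rule CollectI) apply (rule exI[of _ a]) using \<open>a \<in> Ed\<close> by simp
  ultimately show ?thesis using wc_ctx[of x y c "[GV (r a), GS a]" "[GS a]"] by simp
qed

lemma R_Ss: "a \<in> Ed \<Longrightarrow> set x \<subseteq> G \<Longrightarrow> set y \<subseteq> G \<Longrightarrow> wc c (x @ GS a # GV (s a) # y) (x @ GS a # y)"
proof -
  assume "a \<in> Ed" "set x \<subseteq> G" "set y \<subseteq> G"
  moreover have "wc c [GS a, GV (s a)] [GS a]"
    apply (rule rel_wc) apply (unfold lpa_rels_def) apply (rule UnI1) apply (rule UnI1) apply (rule UnI2) apply (rule CollectI) apply (rule exI[of _ a]) using \<open>a \<in> Ed\<close> by simp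
  ultimately show ?thesis using wc_ctx[of x y c "[GS a, GV (s a)]" "[GS a]"] by simp
qed

lemma R_SE: "a \<in> Ed \<Longrightarrow> set x \<subseteq> G \<Longrightarrow> set y \<subseteq> G \<Longrightarrow> wc c (x @ GS a # GE a # y) (x @ GV (r a) # y)"
proof -
  assume "a \<in> Ed" "set x \<subseteq> G" "set y \<subseteq> G"
  moreover have "wc c [GS a, GE a] [GV (r a)]"
    apply (rule rel_wc) apply (unfold lpa_rels_def) apply (rule UnI1) apply (rule UnI2) apply (rule CollectI) apply (rule exI[of _ a]) apply (rule exI[of _ a]) using \<open>a \<in> Ed\<close> by simp
  ultimately show ?thesis using wc_ctx[of x y c "[GS a, GE a]" "[GV (r a)]"] by simp
qed

lemma R_SE': "a \<in> Ed \<Longrightarrow> b \<in> Ed \<Longrightarrow> a \<noteq> b \<Longrightarrow> set x \<subseteq> G \<Longrightarrow> set y \<subseteq> G \<Longrightarrow> wz c (x @ GS a # GE b # y)"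
proof -
  assume "a \<in> Ed" "b \<in> Ed" "a \<noteq> b" "set x \<subseteq> G" "set y \<subseteq> G"
  moreover have "wz c [GS a, GE b]"
    apply (rule rel_wz) apply (unfold lpa_rels_def) apply (rule UnI1) apply (rule UnI2) apply (rule CollectI) apply (rule exI[of _ a]) apply (rule exI[of _ b]) using \<open>a \<in> Ed\<close> \<open>b \<in> Ed\<close> \<open>a \<noteq> b\<close> by simp
  ultimately show ?thesis using wz_ctx[of x y c "[GS a, GE b]"] by simp
qed

end

fun psrc :: "('e \<Rightarrow> 'v) \<Rightarrow> ('v, 'e) path \<Rightarrow> 'v" where
  "psrc s (PV v) = v"
| "psrc s (PE es) = s (hd es)"

fun pprefix :: "('e \<Rightarrow> 'v) \<Rightarrow> ('v, 'e) path \<Rightarrow> ('v, 'e) path \<Rightarrow> bool" where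
  "pprefix s (PV v) (PV v') \<longleftrightarrow> v = v'"
| "pprefix s (PV v) (PE es) \<longleftrightarrow> s (hd es) = v"
| "pprefix s (PE es) (PV v) \<longleftrightarrow> False"
| "pprefix s (PE es) (PE es') \<longleftrightarrow> (\<exists>t. es' = es @ t)"

context lpa_ctx begin

abbreviation isp where "isp \<equiv> is_path V Ed s r"

lemma edges_G: "set es \<subseteq> Ed \<Longrightarrow> set (map GE es) \<subseteq> G \<and> set (rev (map GS es)) \<subseteq> G"
  by auto

lemma path_G: "isp a \<Longrightarrow> set (p_word a) \<subseteq> G \<and> set (p_ghost_word a) \<subseteq> G"
  by (cases a) auto

lemma path_V: "isp a \<Longrightarrow> p_range r a \<in> V \<and> psrc s a \<in> V"
  by (cases a) (auto intro!: sV' rV')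

lemma G_edges: "isp (PE es) \<Longrightarrow> wc c (rev (map GS es) @ map GE es) [GV (r (last es))]"
proof (induction es)
  case Nil then show ?case by simp
next
  case (Cons a es')
  show ?case
  proof (cases es')
    case Nil
    then show ?thesis using Cons.prems R_SE[of a "[]" "[]" c] by simp
  next
    case (Cons b l)
    let ?X = "rev (map GS es')"
    have p: "a \<in> Ed" "r a = s b" "isp (PE (b # l))"
      using Cons.prems \<open>es' = b # l\<close> is_path_Cons2 by auto
    have XG: "set ?X \<subseteq> G" "set (map GE es') \<subseteq> G" using p Cons by auto
    have 1: "wc c (?X @ GS a # GE a # map GE es') (?X @ GV (r a) # map GE es')"
      using R_SE[OF p(1) XG] .
    have 2: "wc c (?X @ GV (r a) # map GE es') (?X @ map GE es')"
      using R_sE[of b ?X "map GE l" c] p XG Cons by simp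
    have 3: "wc c (?X @ map GE es') [GV (r (last es'))]"
      using Cons.IH p Cons by simp
    show ?thesis using wc_trans[OF wc_trans[OF 1 2] 3] Cons by simp
  qed
qed

lemma G_path: "isp a \<Longrightarrow> wc c (p_ghost_word a @ p_word a) [GV (p_range r a)]"
proof (cases a)
  case (PV v)
  assume "isp a"
  then show ?thesis using PV R_vv[of v "[]" "[]" c] by simp
next
  case (PE es)
  assume "isp a"
  then show ?thesis using PE G_edges by simp
qed

lemma WR_path: "isp a \<Longrightarrow> wc c (p_word a @ [GV (p_range r a)]) (p_word a)"
proof (cases a)
  case (PV v)
  assume "isp a"
  then show ?thesis using PV R_vv[of v "[]" "[]" c] by simp
next
  case (PE es)
  assume a: "isp a"
  then have es: "es \<noteq> []" "set es \<subseteq> Ed" using PE by auto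
  then have eq: "es = butlast es @ [last es]" by simp
  have "set (map GE (butlast es)) \<subseteq> G" using es by (auto dest: in_set_butlastD)
  moreover have "last es \<in> Ed" using es by auto
  ultimately have "wc c (map GE (butlast es) @ GE (last es) # GV (r (last es)) # [])
        (map GE (butlast es) @ GE (last es) # [])"
    by (intro R_Er) auto
  then have "wc c (map GE (butlast es @ [last es]) @ [GV (r (last es))]) (map GE (butlast es @ [last es]))"
    by simp
  then show ?thesis using PE eq by (metis p_range.simps(2) p_word.simps(2))
qed

lemma RG_path: "isp a \<Longrightarrow> wc c (GV (p_range r a) # p_ghost_word a) (p_ghost_word a)"
proof (cases a)
  case (PV v)
  assume "isp a"
  then show ?thesis using PV R_vv[of v "[]" "[]" c] by simp
next
  case (PE es)
  assume a: "isp a"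
  then have es: "es \<noteq> []" "set es \<subseteq> Ed" using PE by auto
  then have eq: "es = butlast es @ [last es]" by simp
  have "set (rev (map GS (butlast es))) \<subseteq> G" using es by (auto dest: in_set_butlastD)
  moreover have "last es \<in> Ed" using es by auto
  ultimately have "wc c ([] @ GV (r (last es)) # GS (last es) # rev (map GS (butlast es)))
        ([] @ GS (last es) # rev (map GS (butlast es)))"
    by (intro R_rS) auto
  then have "wc c (GV (r (last es)) # rev (map GS (butlast es @ [last es]))) (rev (map GS (butlast es @ [last es])))"
    by simp
  then show ?thesis using PE eq by (metis p_range.simps(2) p_ghost_word.simps(2))
qed

lemma SW_path: "isp a \<Longrightarrow> wc c (GV (psrc s a) # p_word a) (p_word a)"
proof (cases a)
  case (PV v)
  assume "isp a"
  then show ?thesis using PV R_vv[of v "[]" "[]" c] by simp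
next
  case (PE es)
  assume a: "isp a"
  then have es: "es \<noteq> []" "set es \<subseteq> Ed" using PE by auto
  then have eq: "es = hd es # tl es" by simp
  have "set (map GE (tl es)) \<subseteq> G" using es by (auto dest: list.set_sel(2))
  moreover have "hd es \<in> Ed" using es by auto
  ultimately have "wc c ([] @ GV (s (hd es)) # GE (hd es) # map GE (tl es)) ([] @ GE (hd es) # map GE (tl es))"
    by (intro R_sE) auto
  then show ?thesis using PE eq by (metis append_Nil list.simps(9) p_word.simps(2) psrc.simps(2))
qed

lemma GS_path: "isp a \<Longrightarrow> wc c (p_ghost_word a @ [GV (psrc s a)]) (p_ghost_word a)"
proof (cases a)
  case (PV v)
  assume "isp a"
  then show ?thesis using PV R_vv[of v "[]" "[]" c] by simp
next
  case (PE es)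
  assume a: "isp a"
  then have es: "es \<noteq> []" "set es \<subseteq> Ed" using PE by auto
  then have eq: "es = hd es # tl es" by simp
  have "set (rev (map GS (tl es))) \<subseteq> G" using es by (auto dest: list.set_sel(2))
  moreover have "hd es \<in> Ed" using es by auto
  ultimately have "wc c (rev (map GS (tl es)) @ GS (hd es) # GV (s (hd es)) # []) (rev (map GS (tl es)) @ GS (hd es) # [])"
    by (intro R_Ss) auto
  then have "wc c (rev (map GS (hd es # tl es)) @ [GV (s (hd es))]) (rev (map GS (hd es # tl es)))"
    by simp
  then show ?thesis using PE eq by (metis p_ghost_word.simps(2) psrc.simps(2))
qed

end

context lpa_ctx begin

lemma isp_tail: "isp (PE (a # l)) \<Longrightarrow> l \<noteq> [] \<Longrightarrow> a \<in> Ed \<and> r a = s (hd l) \<and> isp (PE l)"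
  by (cases l) (auto simp: is_path_Cons2 simp del: is_path.simps)

lemma I_edges: "isp (PE es) \<Longrightarrow> isp (PE es') \<Longrightarrow> \<not>(\<exists>t. es' = es @ t) \<Longrightarrow> \<not>(\<exists>t. es = es' @ t)
   \<Longrightarrow> wz c (rev (map GS es) @ map GE es')"
proof (induction es arbitrary: es')
  case Nil then show ?case by simp
next
  case (Cons a x)
  obtain b y where es': "es' = b # y" using Cons.prems(2) by (cases es') auto
  have aE: "a \<in> Ed" "b \<in> Ed" using Cons.prems es' by auto
  have XG: "set (rev (map GS x)) \<subseteq> G" "set (map GE y) \<subseteq> G" using Cons.prems es' by auto
  show ?case
  proof (cases "a = b")
    case False
    then show ?thesis using R_SE'[OF aE False XG] es' by simp
  next
    case True
    have xne: "x \<noteq> []" using Cons.prems(3) es' True by auto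
    have yne: "y \<noteq> []" using Cons.prems(4) es' True by auto
    have px: "isp (PE x)" using isp_tail[OF Cons.prems(1) xne] by simp
    have py: "isp (PE y)" "r b = s (hd y)" using isp_tail[of b y] Cons.prems(2) es' yne by auto
    have inc: "\<not>(\<exists>t. y = x @ t)" "\<not>(\<exists>t. x = y @ t)" using Cons.prems(3,4) es' True by auto
    have IH: "wz c (rev (map GS x) @ map GE y)" using Cons.IH[OF px py(1) inc] .
    have 1: "wc c (rev (map GS x) @ GS a # GE a # map GE y) (rev (map GS x) @ GV (r a) # map GE y)"
      using R_SE[OF aE(1) XG] .
    have yeq: "y = hd y # tl y" using yne by simp
    have hdE: "hd y \<in> Ed" "set (map GE (tl y)) \<subseteq> G" using py(1) yne
      by (auto dest: list.set_sel(2))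
    have 2: "wc c (rev (map GS x) @ GV (r a) # map GE y) (rev (map GS x) @ map GE y)"
      using R_sE[OF hdE(1) XG(1) hdE(2), of c] True py(2) yeq
      by (metis append_Cons append_Nil list.simps(9))
    show ?thesis using wz_wc[OF wc_trans[OF 1 2] IH] es' True by simp
  qed
qed

lemma I_path: "isp a \<Longrightarrow> isp b \<Longrightarrow> \<not> pprefix s a b \<Longrightarrow> \<not> pprefix s b a
   \<Longrightarrow> wz c (p_ghost_word a @ p_word b)"
proof (cases a; cases b)
  fix v v' assume ab: "a = PV v" "b = PV v'" and h: "isp a" "isp b" "\<not> pprefix s a b"
  then show ?thesis using R_vv'[of v v' "[]" "[]" c] by simp
next
  fix v es assume ab: "a = PV v" "b = PE es" and h: "isp a" "isp b" "\<not> pprefix s a b"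
  have 1: "wc c (GV v # GV (psrc s b) # p_word b) (GV v # p_word b)"
    using wc_left[OF _ SW_path[OF h(2)], of "[GV v]"] h ab by simp
  have "wz c ([] @ GV v # GV (psrc s b) # p_word b)"
    using h ab path_V[OF h(2)] path_G[OF h(2)] by (intro R_vv') auto
  then show ?thesis using wz_wc[OF wc_sym[OF 1]] ab by simp
next
  fix es v assume ab: "a = PE es" "b = PV v" and h: "isp a" "isp b" "\<not> pprefix s b a"
  have 1: "wc c (p_ghost_word a @ [GV (psrc s a), GV v]) (p_ghost_word a @ [GV v])"
    using wc_right[OF _ GS_path[OF h(1)], of "[GV v]"] h ab by simp
  have "wz c (p_ghost_word a @ GV (psrc s a) # GV v # [])"
    using h ab path_V[OF h(1)] path_G[OF h(1)] by (intro R_vv') auto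
  then show ?thesis using wz_wc[OF wc_sym[OF 1]] ab by simp
next
  fix es es' assume ab: "a = PE es" "b = PE es'" and h: "isp a" "isp b" "\<not> pprefix s a b" "\<not> pprefix s b a"
  then show ?thesis using I_edges[of es es' c] by simp
qed

lemma P_path: "isp a \<Longrightarrow> isp b \<Longrightarrow> pprefix s a b \<Longrightarrow>
   wc c (p_word a @ p_ghost_word a @ p_word b) (p_word b) \<and>
   wc c (p_ghost_word b @ p_word a @ p_ghost_word a) (p_ghost_word b)"
proof (cases a; cases b)
  fix v v' assume ab: "a = PV v" "b = PV v'" and h: "isp a" "isp b" "pprefix s a b"
  then have "wc c [GV v, GV v, GV v] [GV v]"
    using wc_trans[OF R_vv[of v "[]" "[GV v]" c] R_vv[of v "[]" "[]" c]] by simp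
  then show ?thesis using ab h by simp
next
  fix v es assume ab: "a = PV v" "b = PE es" and h: "isp a" "isp b" "pprefix s a b"
  have v: "v \<in> V" "psrc s b = v" using h ab by auto
  have 1: "wc c (GV (psrc s b) # GV (psrc s b) # p_word b) (GV (psrc s b) # p_word b)"
    using R_vv[of "psrc s b" "[]" "p_word b" c] v path_G[OF h(2)] by simp
  have 2: "wc c (p_ghost_word b @ GV (psrc s b) # GV (psrc s b) # []) (p_ghost_word b @ [GV (psrc s b)])"
    using R_vv[of "psrc s b" "p_ghost_word b" "[]" c] v path_G[OF h(2)] by simp
  show ?thesis using wc_trans[OF 1 SW_path[OF h(2)]] wc_trans[OF 2 GS_path[OF h(2)]] ab v by simp
next
  fix es v assume ab: "a = PE es" "b = PV v" and h: "pprefix s a b"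
  then show ?thesis by simp
next
  fix es es' assume ab: "a = PE es" "b = PE es'" and h: "isp a" "isp b" "pprefix s a b"
  then obtain t where t: "es' = es @ t" by auto
  have tG: "set (map GE t) \<subseteq> G" "set (rev (map GS t)) \<subseteq> G" using h(2) ab t by auto
  have aG: "set (p_word a) \<subseteq> G" "set (p_ghost_word a) \<subseteq> G" using path_G[OF h(1)] by auto
  have 1: "wc c (p_word a @ (p_ghost_word a @ p_word a) @ map GE t) (p_word a @ [GV (p_range r a)] @ map GE t)"
    using wc_ctx[OF aG(1) tG(1) G_path[OF h(1)]] .
  have 2: "wc c (p_word a @ [GV (p_range r a)] @ map GE t) (p_word a @ map GE t)"
    using wc_right[OF tG(1) WR_path[OF h(1)]] by simp
  have 3: "wc c (rev (map GS t) @ (p_ghost_word a @ p_word a) @ p_ghost_word a) (rev (map GS t) @ [GV (p_range r a)] @ p_ghost_word a)"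
    using wc_ctx[OF tG(2) aG(2) G_path[OF h(1)]] .
  have 4: "wc c (rev (map GS t) @ [GV (p_range r a)] @ p_ghost_word a) (rev (map GS t) @ p_ghost_word a)"
    using wc_left[OF tG(2) RG_path[OF h(1)]] by simp
  have "wc c (p_word a @ p_ghost_word a @ p_word b) (p_word b)"
    using wc_trans[OF 1 2] ab t by simp
  moreover have "wc c (p_ghost_word b @ p_word a @ p_ghost_word a) (p_ghost_word b)"
    using wc_trans[OF 3 4] ab t by simp
  ultimately show ?thesis ..
qed

end

fun plen :: "('v, 'e) path \<Rightarrow> nat" where
  "plen (PV v) = 0"
| "plen (PE es) = length es"

lemma fsum_cong: "(\<And>m. m \<in> P \<Longrightarrow> g m = h m) \<Longrightarrow> fsum P g = fsum P h"
  unfolding fsum_def by (rule ext) (rule sum.cong, auto)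

context lpa_ctx begin

lemma pp_refl: "isp a \<Longrightarrow> pprefix s a a"
  by (cases a) auto

lemma pp_trans: "isp a \<Longrightarrow> isp b \<Longrightarrow> isp c \<Longrightarrow> pprefix s a b \<Longrightarrow> pprefix s b c \<Longrightarrow> pprefix s a c"
  by (cases a; cases b; cases c) auto

lemma pp_common: "isp a \<Longrightarrow> isp b \<Longrightarrow> isp c \<Longrightarrow> pprefix s a c \<Longrightarrow> pprefix s b c
   \<Longrightarrow> pprefix s a b \<or> pprefix s b a"
  by (cases a; cases b; cases c) (auto simp: append_eq_append_conv2)

lemma pp_len: "isp a \<Longrightarrow> isp b \<Longrightarrow> pprefix s a b \<Longrightarrow> a \<noteq> b \<Longrightarrow> plen a < plen b"
  by (cases a; cases b) auto

definition minset :: "('v, 'e) path set \<Rightarrow> ('v, 'e) path set" where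
  "minset K = {m \<in> K. \<forall>k\<in>K. pprefix s k m \<longrightarrow> k = m}"

lemma minset_cover: "(\<And>k. k \<in> K \<Longrightarrow> isp k) \<Longrightarrow> k \<in> K \<Longrightarrow> \<exists>m\<in>minset K. pprefix s m k"
proof (induction "plen k" arbitrary: k rule: less_induct)
  case less
  show ?case
  proof (cases "k \<in> minset K")
    case True
    then show ?thesis using pp_refl less by blast
  next
    case False
    then obtain k' where k': "k' \<in> K" "pprefix s k' k" "k' \<noteq> k"
      using less.prems unfolding minset_def by blast
    then have "plen k' < plen k" using pp_len less.prems by blast
    then obtain m where "m \<in> minset K" "pprefix s m k'" using less k' by blast
    moreover have "m \<in> K" using \<open>m \<in> minset K\<close> by (simp add: minset_def)
    ultimately show ?thesis using pp_trans less.prems k' by blast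
  qed
qed

lemma minset_anti: "m \<in> minset K \<Longrightarrow> m' \<in> minset K \<Longrightarrow> pprefix s m m' \<Longrightarrow> m = m'"
  unfolding minset_def by blast

lemma minset_sub: "minset K \<subseteq> K" unfolding minset_def by blast

definition valid :: "('v \<Rightarrow> 'i brandt) \<Rightarrow> ('e \<Rightarrow> 'i brandt) \<Rightarrow> 'i brandt \<Rightarrow> ('v, 'e) path \<Rightarrow> ('v, 'e) path \<Rightarrow> bool" where
  "valid wv we \<sigma> \<mu> \<eta> \<longleftrightarrow> \<sigma> \<noteq> BZero \<and> isp \<mu> \<and> isp \<eta> \<and> p_range r \<mu> = p_range r \<eta> \<and>
      bmult (p_weight wv we \<mu>) (binv (p_weight wv we \<eta>)) = \<sigma>"

lemma span_terms: "f \<in> lpa_span V Ed s r wv we \<sigma> \<Longrightarrow> \<exists>n M H c.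
   f = fsum {..<n::nat} (\<lambda>i. mono (p_word (M i) @ p_ghost_word (H i)) (c i)) \<and> (\<forall>i<n. valid wv we \<sigma> (M i) (H i))"
proof (induction rule: lpa_span.induct)
  case ls_zero
  show ?case by (rule_tac x=0 in exI) simp
next
  case (ls_step \<mu> \<eta> f c)
  then obtain n M H cc where f: "f = fsum {..<n::nat} (\<lambda>i. mono (p_word (M i) @ p_ghost_word (H i)) (cc i))"
    and v: "\<forall>i<n. valid wv we \<sigma> (M i) (H i)" by blast
  let ?M = "M(n := \<mu>)" and ?H = "H(n := \<eta>)" and ?c = "cc(n := c)"
  have "fa_add (mono (p_word \<mu> @ p_ghost_word \<eta>) c) f =
      fsum {..<Suc n} (\<lambda>i. mono (p_word (?M i) @ p_ghost_word (?H i)) (?c i))"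
  proof -
    have "fsum {..<n} (\<lambda>i. mono (p_word (?M i) @ p_ghost_word (?H i)) (?c i)) = f"
      unfolding f by (rule fsum_cong) simp
    then show ?thesis by (simp add: lessThan_Suc fsum_insert)
  qed
  moreover have "\<forall>i<Suc n. valid wv we \<sigma> (?M i) (?H i)"
    using v ls_step.hyps by (auto simp: valid_def less_Suc_eq)
  ultimately show ?case by blast
qed

lemma span_carrier: "f \<in> lpa_span V Ed s r wv we \<sigma> \<Longrightarrow> f \<in> C"
proof (induction rule: lpa_span.induct)
  case ls_zero then show ?case by simp
next
  case (ls_step \<mu> \<eta> f c)
  have "p_word \<mu> \<noteq> []" by (cases \<mu>) (use ls_step in auto)
  then have "mono (p_word \<mu> @ p_ghost_word \<eta>) c \<in> C"
    using path_G[OF ls_step.hyps(2)] path_G[OF ls_step.hyps(3)] by (intro mono_carrier) auto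
  then show ?case using ls_step add_carrier by blast
qed

end

lemma binv_bmult: "bmult a (binv b) \<noteq> BZero \<Longrightarrow> binv (bmult a (binv b)) = bmult b (binv a)"
  by (cases a; cases b) auto

context lpa_ctx begin

lemma wc_cong: "wc c u w \<Longrightarrow> cong (mono u c) (mono w c)" by (simp add: wc_def)
lemma wz_cong: "wz c u \<Longrightarrow> cong (mono u c) fa_zero" by (simp add: wz_def cong_zero_iff)

lemma fsum_to_single:
  assumes "finite P" "m0 \<in> P" "\<And>m. m \<in> P \<Longrightarrow> m \<noteq> m0 \<Longrightarrow> cong (g m) fa_zero" "cong (g m0) x"
  shows "cong (fsum P g) x"
proof -
  have "cong (fsum P g) (fsum P (\<lambda>m. if m = m0 then x else fa_zero))"
    using assms by (intro cong_fsum) auto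
  also have "fsum P (\<lambda>m. if m = m0 then x else fa_zero) = x"
    using fsum_single[OF assms(1,2), of "\<lambda>m. if m = m0 then x else fa_zero"] by simp
  finally show ?thesis .
qed

lemma left_unit:
  fixes f :: "('v, 'e, 'r::ring_1) fa"
  assumes f: "f \<in> lpa_span V Ed s r wv we \<sigma>"
  shows "\<exists>(P::(('v, 'e) path) set) A B. finite P \<and> (\<forall>m\<in>P. A m \<in> lpa_span V Ed s r wv we \<sigma> \<and> B m \<in> lpa_span V Ed s r wv we (binv \<sigma>))
     \<and> cong (fa_mult (fsum P (\<lambda>m. fa_mult (A m) (B m))) f) f"
proof -
  obtain n M H c where fe: "f = fsum {..<n::nat} (\<lambda>i. mono (p_word (M i) @ p_ghost_word (H i)) (c i))"
    and v: "\<forall>i<n. valid wv we \<sigma> (M i) (H i)" using span_terms[OF f] by blast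
  define K where "K = M ` {..<n}"
  define P where "P = minset K"
  define idx where "idx m = (SOME i. i < n \<and> M i = m)" for m
  have idx: "idx m < n \<and> M (idx m) = m" if "m \<in> P" for m
  proof -
    have "\<exists>i. i < n \<and> M i = m" using that minset_sub unfolding P_def K_def by blast
    then show ?thesis unfolding idx_def by (rule someI_ex)
  qed
  have Kp: "isp k" if "k \<in> K" for k using that v unfolding K_def valid_def by auto
  have finP: "finite P" unfolding P_def K_def using minset_sub finite_subset by blast
  define A where "A m = mono (p_word m @ p_ghost_word (H (idx m))) (1::'r)" for m
  define B where "B m = mono (p_word (H (idx m)) @ p_ghost_word m) (1::'r)" for m
  define T where "T m = p_word m @ p_ghost_word (H (idx m)) @ p_word (H (idx m)) @ p_ghost_word m" for m
  have vm: "valid wv we \<sigma> m (H (idx m))" if "m \<in> P" for m using idx[OF that] v by auto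
  have AB: "A m \<in> lpa_span V Ed s r wv we \<sigma> \<and> B m \<in> lpa_span V Ed s r wv we (binv \<sigma>)" if "m \<in> P" for m
  proof -
    have vv: "valid wv we \<sigma> m (H (idx m))" using vm[OF that] .
    have "fa_add (A m) fa_zero \<in> lpa_span V Ed s r wv we \<sigma>"
      unfolding A_def using vv unfolding valid_def by (intro lpa_span.ls_step lpa_span.ls_zero) auto
    moreover have "fa_add (B m) fa_zero \<in> lpa_span V Ed s r wv we (binv \<sigma>)"
    proof -
      have "binv \<sigma> \<noteq> BZero" using vv by (cases \<sigma>) (auto simp: valid_def)
      moreover have "bmult (p_weight wv we (H (idx m))) (binv (p_weight wv we m)) = binv \<sigma>"
        using vv binv_bmult unfolding valid_def by metis
      ultimately show ?thesis
        unfolding B_def using vv unfolding valid_def by (intro lpa_span.ls_step lpa_span.ls_zero) auto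
    qed
    moreover have "fa_add g fa_zero = g" for g :: "('v, 'e, 'r) fa"
      by (rule ext) (simp add: fa_add_def fa_zero_def)
    ultimately show ?thesis by simp
  qed
  have ABT: "fa_mult (A m) (B m) = mono (T m) 1" for m
    unfolding A_def B_def T_def by (simp add: mono_mult)
  have trm: "cong (fa_mult (fsum P (\<lambda>m. mono (T m) 1)) (mono (p_word (M i) @ p_ghost_word (H i)) (c i)))
       (mono (p_word (M i) @ p_ghost_word (H i)) (c i))" if i: "i < n" for i
  proof -
    let ?\<mu> = "M i" and ?\<eta> = "H i"
    have vi: "valid wv we \<sigma> ?\<mu> ?\<eta>" using v i by auto
    have pm: "isp ?\<mu>" "isp ?\<eta>" using vi by (auto simp: valid_def)
    have muK: "?\<mu> \<in> K" using i unfolding K_def by auto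
    obtain m0 where m0: "m0 \<in> P" "pprefix s m0 ?\<mu>"
      using minset_cover[OF Kp muK] unfolding P_def by blast
    have "fa_mult (fsum P (\<lambda>m. mono (T m) 1)) (mono (p_word ?\<mu> @ p_ghost_word ?\<eta>) (c i))
        = fsum P (\<lambda>m. mono (T m @ p_word ?\<mu> @ p_ghost_word ?\<eta>) (c i))"
      by (simp add: fsum_mult_left mono_mult)
    moreover have "cong (fsum P (\<lambda>m. mono (T m @ p_word ?\<mu> @ p_ghost_word ?\<eta>) (c i))) (mono (p_word ?\<mu> @ p_ghost_word ?\<eta>) (c i))"
    proof (rule fsum_to_single[OF finP m0(1)])
      fix m assume m: "m \<in> P" "m \<noteq> m0"
      have vmm: "valid wv we \<sigma> m (H (idx m))" using vm[OF m(1)] .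
      have ispm: "isp m" "isp (H (idx m))" using vmm by (auto simp: valid_def)
      have mK: "m \<in> K" "m0 \<in> K" using m m0 minset_sub unfolding P_def by auto
      have n1: "\<not> pprefix s m ?\<mu>"
      proof
        assume "pprefix s m ?\<mu>"
        then have "pprefix s m m0 \<or> pprefix s m0 m" using pp_common Kp mK pm m0 by blast
        then show False using minset_anti m m0 unfolding P_def by metis
      qed
      have n2: "\<not> pprefix s ?\<mu> m"
      proof
        assume "pprefix s ?\<mu> m"
        then have "pprefix s m0 m" using pp_trans Kp mK pm m0 by blast
        then show False using minset_anti m m0 unfolding P_def by metis
      qed
      have "wz (c i) (p_ghost_word m @ p_word ?\<mu>)" using I_path[OF ispm(1) pm(1) n1 n2] .
      then have "wz (c i) ((p_word m @ p_ghost_word (H (idx m)) @ p_word (H (idx m))) @ (p_ghost_word m @ p_word ?\<mu>) @ p_ghost_word ?\<eta>)"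
        using path_G ispm pm by (intro wz_ctx) auto
      then show "cong (mono (T m @ p_word ?\<mu> @ p_ghost_word ?\<eta>) (c i)) fa_zero"
        unfolding T_def by (intro wz_cong) simp
    next
      let ?h = "H (idx m0)"
      have vmm: "valid wv we \<sigma> m0 ?h" using vm[OF m0(1)] .
      have ispm: "isp m0" "isp ?h" "p_range r ?h = p_range r m0" using vmm by (auto simp: valid_def)
      have G1: "set (p_word m0) \<subseteq> G" "set (p_ghost_word m0 @ p_word ?\<mu> @ p_ghost_word ?\<eta>) \<subseteq> G"
        "set (p_ghost_word ?\<eta>) \<subseteq> G"
        using path_G ispm pm by auto
      have 1: "wc (c i) (p_word m0 @ p_ghost_word ?h @ p_word ?h @ p_ghost_word m0 @ p_word ?\<mu> @ p_ghost_word ?\<eta>)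
          (p_word m0 @ GV (p_range r m0) # p_ghost_word m0 @ p_word ?\<mu> @ p_ghost_word ?\<eta>)"
        using wc_ctx[OF G1(1) G1(2) G_path[OF ispm(2)]] ispm(3) by simp
      have 2: "wc (c i) (p_word m0 @ GV (p_range r m0) # p_ghost_word m0 @ p_word ?\<mu> @ p_ghost_word ?\<eta>)
          (p_word m0 @ p_ghost_word m0 @ p_word ?\<mu> @ p_ghost_word ?\<eta>)"
        using wc_right[OF G1(2) WR_path[OF ispm(1)]] by simp
      have 3: "wc (c i) (p_word m0 @ p_ghost_word m0 @ p_word ?\<mu> @ p_ghost_word ?\<eta>) (p_word ?\<mu> @ p_ghost_word ?\<eta>)"
        using wc_right[OF G1(3) conjunct1[OF P_path[OF ispm(1) pm(1) m0(2)]]] by simp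
      have "wc (c i) (T m0 @ p_word ?\<mu> @ p_ghost_word ?\<eta>) (p_word ?\<mu> @ p_ghost_word ?\<eta>)"
        using wc_trans[OF wc_trans[OF 1 2] 3] unfolding T_def by simp
      then show "cong (mono (T m0 @ p_word ?\<mu> @ p_ghost_word ?\<eta>) (c i)) (mono (p_word ?\<mu> @ p_ghost_word ?\<eta>) (c i))"
        by (rule wc_cong)
    qed
    ultimately show ?thesis by simp
  qed
  have "cong (fa_mult (fsum P (\<lambda>m. mono (T m) 1)) f) f"
    unfolding fe fsum_mult_right by (rule cong_fsum) (use trm in auto)
  moreover have "fsum P (\<lambda>m. fa_mult (A m) (B m)) = fsum P (\<lambda>m. mono (T m) 1)"
    by (simp add: ABT)
  ultimately have fin: "cong (fa_mult (fsum P (\<lambda>m. fa_mult (A m) (B m))) f) f" by (simp only:)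
  show ?thesis
  proof (intro exI conjI)
    show "finite P" by (rule finP)
    show "\<forall>m\<in>P. A m \<in> lpa_span V Ed s r wv we \<sigma> \<and> B m \<in> lpa_span V Ed s r wv we (binv \<sigma>)"
      using AB by blast
    show "cong (fa_mult (fsum P (\<lambda>m. fa_mult (A m) (B m))) f) f" by (rule fin)
  qed
qed

end

context lpa_ctx begin

lemma right_unit:
  fixes f :: "('v, 'e, 'r::ring_1) fa"
  assumes f: "f \<in> lpa_span V Ed s r wv we \<sigma>"
  shows "\<exists>(Q::(('v, 'e) path) set) A B. finite Q \<and> (\<forall>q\<in>Q. A q \<in> lpa_span V Ed s r wv we (binv \<sigma>) \<and> B q \<in> lpa_span V Ed s r wv we \<sigma>)
     \<and> cong (fa_mult f (fsum Q (\<lambda>q. fa_mult (A q) (B q)))) f"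
proof -
  obtain n M H c where fe: "f = fsum {..<n::nat} (\<lambda>i. mono (p_word (M i) @ p_ghost_word (H i)) (c i))"
    and v: "\<forall>i<n. valid wv we \<sigma> (M i) (H i)" using span_terms[OF f] by blast
  define K where "K = H ` {..<n}"
  define Q where "Q = minset K"
  define idx where "idx q = (SOME i. i < n \<and> H i = q)" for q
  have idx: "idx q < n \<and> H (idx q) = q" if "q \<in> Q" for q
  proof -
    have "\<exists>i. i < n \<and> H i = q" using that minset_sub unfolding Q_def K_def by blast
    then show ?thesis unfolding idx_def by (rule someI_ex)
  qed
  have Kp: "isp k" if "k \<in> K" for k using that v unfolding K_def valid_def by auto
  have finQ: "finite Q" unfolding Q_def K_def using minset_sub finite_subset by blast
  define A where "A q = mono (p_word q @ p_ghost_word (M (idx q))) (1::'r)" for q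
  define B where "B q = mono (p_word (M (idx q)) @ p_ghost_word q) (1::'r)" for q
  define T where "T q = p_word q @ p_ghost_word (M (idx q)) @ p_word (M (idx q)) @ p_ghost_word q" for q
  have vm: "valid wv we \<sigma> (M (idx q)) q" if "q \<in> Q" for q using idx[OF that] v by auto
  have AB: "A q \<in> lpa_span V Ed s r wv we (binv \<sigma>) \<and> B q \<in> lpa_span V Ed s r wv we \<sigma>" if "q \<in> Q" for q
  proof -
    have vv: "valid wv we \<sigma> (M (idx q)) q" using vm[OF that] .
    have "fa_add (B q) fa_zero \<in> lpa_span V Ed s r wv we \<sigma>"
      unfolding B_def using vv unfolding valid_def by (intro lpa_span.ls_step lpa_span.ls_zero) auto
    moreover have "fa_add (A q) fa_zero \<in> lpa_span V Ed s r wv we (binv \<sigma>)"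
    proof -
      have "binv \<sigma> \<noteq> BZero" using vv by (cases \<sigma>) (auto simp: valid_def)
      moreover have "bmult (p_weight wv we q) (binv (p_weight wv we (M (idx q)))) = binv \<sigma>"
        using vv binv_bmult unfolding valid_def by metis
      ultimately show ?thesis
        unfolding A_def using vv unfolding valid_def by (intro lpa_span.ls_step lpa_span.ls_zero) auto
    qed
    moreover have "fa_add g fa_zero = g" for g :: "('v, 'e, 'r) fa"
      by (rule ext) (simp add: fa_add_def fa_zero_def)
    ultimately show ?thesis by simp
  qed
  have ABT: "fa_mult (A q) (B q) = mono (T q) 1" for q
    unfolding A_def B_def T_def by (simp add: mono_mult)
  have trm: "cong (fa_mult (mono (p_word (M i) @ p_ghost_word (H i)) (c i)) (fsum Q (\<lambda>q. mono (T q) 1)))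
       (mono (p_word (M i) @ p_ghost_word (H i)) (c i))" if i: "i < n" for i
  proof -
    let ?\<mu> = "M i" and ?\<eta> = "H i"
    have vi: "valid wv we \<sigma> ?\<mu> ?\<eta>" using v i by auto
    have pm: "isp ?\<mu>" "isp ?\<eta>" using vi by (auto simp: valid_def)
    have etaK: "?\<eta> \<in> K" using i unfolding K_def by auto
    obtain q0 where q0: "q0 \<in> Q" "pprefix s q0 ?\<eta>"
      using minset_cover[OF Kp etaK] unfolding Q_def by blast
    have "fa_mult (mono (p_word ?\<mu> @ p_ghost_word ?\<eta>) (c i)) (fsum Q (\<lambda>q. mono (T q) 1))
        = fsum Q (\<lambda>q. mono (p_word ?\<mu> @ p_ghost_word ?\<eta> @ T q) (c i))"
      by (simp add: fsum_mult_right mono_mult)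
    moreover have "cong (fsum Q (\<lambda>q. mono (p_word ?\<mu> @ p_ghost_word ?\<eta> @ T q) (c i))) (mono (p_word ?\<mu> @ p_ghost_word ?\<eta>) (c i))"
    proof (rule fsum_to_single[OF finQ q0(1)])
      fix q assume q: "q \<in> Q" "q \<noteq> q0"
      have vmm: "valid wv we \<sigma> (M (idx q)) q" using vm[OF q(1)] .
      have ispm: "isp q" "isp (M (idx q))" using vmm by (auto simp: valid_def)
      have qK: "q \<in> K" "q0 \<in> K" using q q0 minset_sub unfolding Q_def by auto
      have n2: "\<not> pprefix s q ?\<eta>"
      proof
        assume "pprefix s q ?\<eta>"
        then have "pprefix s q q0 \<or> pprefix s q0 q" using pp_common Kp qK pm q0 by blast
        then show False using minset_anti q q0 unfolding Q_def by metis
      qed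
      have n1: "\<not> pprefix s ?\<eta> q"
      proof
        assume "pprefix s ?\<eta> q"
        then have "pprefix s q0 q" using pp_trans Kp qK pm q0 by blast
        then show False using minset_anti q q0 unfolding Q_def by metis
      qed
      have "wz (c i) (p_ghost_word ?\<eta> @ p_word q)" using I_path[OF pm(2) ispm(1) n1 n2] .
      then have "wz (c i) (p_word ?\<mu> @ (p_ghost_word ?\<eta> @ p_word q) @ (p_ghost_word (M (idx q)) @ p_word (M (idx q)) @ p_ghost_word q))"
        using path_G ispm pm by (intro wz_ctx) auto
      then show "cong (mono (p_word ?\<mu> @ p_ghost_word ?\<eta> @ T q) (c i)) fa_zero"
        unfolding T_def by (intro wz_cong) simp
    next
      let ?h = "M (idx q0)"
      have vmm: "valid wv we \<sigma> ?h q0" using vm[OF q0(1)] .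
      have ispm: "isp q0" "isp ?h" "p_range r ?h = p_range r q0" using vmm by (auto simp: valid_def)
      have G1: "set (p_word ?\<mu> @ p_ghost_word ?\<eta> @ p_word q0) \<subseteq> G" "set (p_ghost_word q0) \<subseteq> G"
        "set (p_word ?\<mu>) \<subseteq> G"
        using path_G ispm pm by auto
      have 1: "wc (c i) (p_word ?\<mu> @ p_ghost_word ?\<eta> @ p_word q0 @ p_ghost_word ?h @ p_word ?h @ p_ghost_word q0)
          (p_word ?\<mu> @ p_ghost_word ?\<eta> @ p_word q0 @ GV (p_range r q0) # p_ghost_word q0)"
        using wc_ctx[OF G1(1) G1(2) G_path[OF ispm(2)]] ispm(3) by simp
      have 2: "wc (c i) (p_word ?\<mu> @ p_ghost_word ?\<eta> @ p_word q0 @ GV (p_range r q0) # p_ghost_word q0)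
          (p_word ?\<mu> @ p_ghost_word ?\<eta> @ p_word q0 @ p_ghost_word q0)"
        using wc_left[OF G1(1) RG_path[OF ispm(1)]] by simp
      have 3: "wc (c i) (p_word ?\<mu> @ p_ghost_word ?\<eta> @ p_word q0 @ p_ghost_word q0) (p_word ?\<mu> @ p_ghost_word ?\<eta>)"
        using wc_left[OF G1(3) conjunct2[OF P_path[where c="c i", OF ispm(1) pm(2) q0(2)]]] by simp
      have "wc (c i) (p_word ?\<mu> @ p_ghost_word ?\<eta> @ T q0) (p_word ?\<mu> @ p_ghost_word ?\<eta>)"
        using wc_trans[OF wc_trans[OF 1 2] 3] unfolding T_def by simp
      then show "cong (mono (p_word ?\<mu> @ p_ghost_word ?\<eta> @ T q0) (c i)) (mono (p_word ?\<mu> @ p_ghost_word ?\<eta>) (c i))"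
        by (rule wc_cong)
    qed
    ultimately show ?thesis by simp
  qed
  have "cong (fa_mult f (fsum Q (\<lambda>q. mono (T q) 1))) f"
    unfolding fe fsum_mult_left by (rule cong_fsum) (use trm in auto)
  moreover have "fsum Q (\<lambda>q. fa_mult (A q) (B q)) = fsum Q (\<lambda>q. mono (T q) 1)"
    by (simp add: ABT)
  ultimately have fin: "cong (fa_mult f (fsum Q (\<lambda>q. fa_mult (A q) (B q)))) f" by (simp only:)
  show ?thesis
  proof (intro exI conjI)
    show "finite Q" by (rule finQ)
    show "\<forall>q\<in>Q. A q \<in> lpa_span V Ed s r wv we (binv \<sigma>) \<and> B q \<in> lpa_span V Ed s r wv we \<sigma>"
      using AB by blast
    show "cong (fa_mult f (fsum Q (\<lambda>q. fa_mult (A q) (B q)))) f" by (rule fin)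
  qed
qed

end

context lpa_ctx begin

lemma comp_prod_fsum:
  fixes A B :: "'a \<Rightarrow> ('v, 'e, 'r::ring_1) fa"
  assumes "finite P" "\<And>m. m \<in> P \<Longrightarrow> A m \<in> C \<and> B m \<in> C \<and> cls (A m) \<in> X \<and> cls (B m) \<in> Y"
  shows "cls (fsum P (\<lambda>m. fa_mult (A m) (B m))) \<in>
     comp_prod (lpa_add V Ed s r) (lpa_mult V Ed s r) (lpa_neg V Ed s r) (lpa_zero V Ed s r) X Y"
  using assms
proof (induction P rule: finite_induct)
  case empty
  then show ?case by (simp add: comp_prod_def lpa_zero_def[symmetric] add_subgroup_gen.asg_zero)
next
  case (insert x F)
  have Cx: "A x \<in> C" "B x \<in> C" "cls (A x) \<in> X" "cls (B x) \<in> Y" using insert.prems by auto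
  have CF: "fsum F (\<lambda>m. fa_mult (A m) (B m)) \<in> C"
    using insert.prems insert.hyps by (intro fsum_carrier mult_carrier) auto
  have IH: "cls (fsum F (\<lambda>m. fa_mult (A m) (B m))) \<in>
     comp_prod (lpa_add V Ed s r) (lpa_mult V Ed s r) (lpa_neg V Ed s r) (lpa_zero V Ed s r) X Y"
    using insert.IH insert.prems by auto
  have eq: "cls (fsum (insert x F) (\<lambda>m. fa_mult (A m) (B m))) =
      lpa_add V Ed s r (lpa_mult V Ed s r (cls (A x)) (cls (B x))) (cls (fsum F (\<lambda>m. fa_mult (A m) (B m))))"
    using insert.hyps Cx CF by (simp add: fsum_insert mult_cls add_cls mult_carrier)
  have g: "lpa_mult V Ed s r (cls (A x)) (cls (B x)) \<in>
     comp_prod (lpa_add V Ed s r) (lpa_mult V Ed s r) (lpa_neg V Ed s r) (lpa_zero V Ed s r) X Y"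
    unfolding comp_prod_def using Cx by (intro add_subgroup_gen.asg_gen) blast
  show ?case unfolding eq using g IH unfolding comp_prod_def by (rule add_subgroup_gen.asg_add)
qed

end

lemma cancel_brandt: "s_cancellative bmult BZero"
  unfolding s_cancellative_def
proof (intro allI conjI impI)
  fix s t u :: "'i brandt"
  show "bmult s u \<noteq> BZero \<and> bmult s u = bmult t u \<Longrightarrow> s = t"
    by (cases s; cases t; cases u) (auto split: if_splits)
  show "bmult u s \<noteq> BZero \<and> bmult u s = bmult u t \<Longrightarrow> s = t"
    by (cases s; cases t; cases u) (auto split: if_splits)
qed

lemma lri_brandt: "s_LRI bmult binv"
  unfolding s_LRI_def
proof
  fix x :: "'i brandt"
  show "\<exists>e f. bmult e e = e \<and> bmult f f = f \<and> bmult e x = x \<and> bmult x f = x \<and>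
               bmult f (binv x) = binv x \<and> bmult (binv x) e = binv x \<and>
               bmult x (binv x) = e \<and> bmult (binv x) x = f"
  proof (cases x)
    case BZero
    then show ?thesis by (intro exI[of _ BZero]) simp
  next
    case (Br i a j)
    then show ?thesis by (intro exI[of _ "Br i 0 i"] exI[of _ "Br j 0 j"]) simp
  qed
qed

theorem theorem5p4:
  fixes V :: "'v set" and Ed :: "'e set" and s r :: "'e \<Rightarrow> 'v"
    and wv :: "'v \<Rightarrow> 'i brandt" and we :: "'e \<Rightarrow> 'i brandt"
  assumes "s ` Ed \<subseteq> V" and "r ` Ed \<subseteq> V"
    and "canonical_weight V Ed s r wv we"
  shows "nearly_eps_graded bmult BZero binv
           (lpa_add V Ed s r) (lpa_mult V Ed s r) (lpa_neg V Ed s r)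
           (lpa_zero V Ed s r :: ('v, 'e, 'r::ring_1) fa set)
           (lpa_comp V Ed s r wv we)"
proof -
  interpret L: lpa_ctx V Ed s r using assms(1,2) by unfold_locales
  let ?CP = "comp_prod (lpa_add V Ed s r) (lpa_mult V Ed s r) (lpa_neg V Ed s r) (lpa_zero V Ed s r :: ('v, 'e, 'r) fa set)"
  have main: "(\<exists>e\<in>?CP (lpa_comp V Ed s r wv we \<sigma>) (lpa_comp V Ed s r wv we (binv \<sigma>)). lpa_mult V Ed s r e x = x) \<and>
        (\<exists>e'\<in>?CP (lpa_comp V Ed s r wv we (binv \<sigma>)) (lpa_comp V Ed s r wv we \<sigma>). lpa_mult V Ed s r x e' = x)"
    if x: "x \<in> lpa_comp V Ed s r wv we \<sigma>" for \<sigma> and x :: "('v, 'e, 'r) fa set"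
  proof -
    obtain f :: "('v, 'e, 'r) fa" where f: "f \<in> lpa_span V Ed s r wv we \<sigma>" and xf: "x = L.cls f"
      using x unfolding lpa_comp_def by blast
    have fC: "f \<in> L.C" using L.span_carrier[OF f] .
    have left: "\<exists>e\<in>?CP (lpa_comp V Ed s r wv we \<sigma>) (lpa_comp V Ed s r wv we (binv \<sigma>)). lpa_mult V Ed s r e x = x"
    proof -
      obtain P :: "('v, 'e) path set" and A B where P: "finite P"
        and AB: "\<forall>m\<in>P. A m \<in> lpa_span V Ed s r wv we \<sigma> \<and> B m \<in> lpa_span V Ed s r wv we (binv \<sigma>)"
        and cg: "L.cong (fa_mult (fsum P (\<lambda>m. fa_mult (A m) (B m))) f) f"
        using L.left_unit[OF f] by blast
      let ?E = "fsum P (\<lambda>m. fa_mult (A m) (B m))"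
      have ABC: "A m \<in> L.C \<and> B m \<in> L.C" if "m \<in> P" for m using AB that L.span_carrier by blast
      have EC: "?E \<in> L.C" using P ABC by (intro fsum_carrier mult_carrier) auto
      have "L.cls ?E \<in> ?CP (lpa_comp V Ed s r wv we \<sigma>) (lpa_comp V Ed s r wv we (binv \<sigma>))"
        using P ABC AB by (intro L.comp_prod_fsum) (auto simp: lpa_comp_def)
      moreover have "lpa_mult V Ed s r (L.cls ?E) x = x"
        unfolding xf using L.mult_cls[OF EC fC] L.cls_eq[OF cg] by simp
      ultimately show ?thesis by blast
    qed
    have right: "\<exists>e'\<in>?CP (lpa_comp V Ed s r wv we (binv \<sigma>)) (lpa_comp V Ed s r wv we \<sigma>). lpa_mult V Ed s r x e' = x"
    proof -
      obtain Q :: "('v, 'e) path set" and A B where Q: "finite Q"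
        and AB: "\<forall>q\<in>Q. A q \<in> lpa_span V Ed s r wv we (binv \<sigma>) \<and> B q \<in> lpa_span V Ed s r wv we \<sigma>"
        and cg: "L.cong (fa_mult f (fsum Q (\<lambda>q. fa_mult (A q) (B q)))) f"
        using L.right_unit[OF f] by blast
      let ?E = "fsum Q (\<lambda>q. fa_mult (A q) (B q))"
      have ABC: "A q \<in> L.C \<and> B q \<in> L.C" if "q \<in> Q" for q using AB that L.span_carrier by blast
      have EC: "?E \<in> L.C" using Q ABC by (intro fsum_carrier mult_carrier) auto
      have "L.cls ?E \<in> ?CP (lpa_comp V Ed s r wv we (binv \<sigma>)) (lpa_comp V Ed s r wv we \<sigma>)"
        using Q ABC AB by (intro L.comp_prod_fsum) (auto simp: lpa_comp_def)
      moreover have "lpa_mult V Ed s r x (L.cls ?E) = x"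
        unfolding xf using L.mult_cls[OF fC EC] L.cls_eq[OF cg] by simp
      ultimately show ?thesis by blast
    qed
    show ?thesis using left right by blast
  qed
  show ?thesis
    unfolding nearly_eps_graded_def using cancel_brandt lri_brandt main by blast
qed

end
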